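(* For every $k\ge0$, the restriction $f_k$ of $f$ to $\mathcal{P}_k$ is an order isomorphism from $\mathcal{P}_k$ (with pattern containment order) onto $\widehat{\mathcal{A}}_{k+1}$ (with subword order): it is a bijection, and for $\sigma,\pi\in\mathcal{P}_k$ we have $\sigma\le\pi$ if and only if $f(\sigma)\le f(\pi)$.
   Context: A permutation of length $n\ge1$ is a word $\pi=\pi_1\cdots\pi_n$ containing each of $1,\dots,n$ exactly once. $\sigma\le\pi$ (pattern containment) if $\pi$ has a subsequence whose letters are in the same relative order as the letters of $\sigma$. A descent of $\pi$ is an index $i$ with $\pi_i>\pi_{i+1}$; $\mathcal{P}_k$ is the set of permutations with exactly $k$ descents, with the induced order. For a letter $c$ of $\pi$, $d_\pi(c)$ is $1$ plus the number of descents at indices before the position of $c$. Words are finite sequences of positive integers with subword order: $v\le w$ if $v$ equals some (not necessarily consecutive) subsequence of $w$. $\max(w)$ is the largest letter of $w$. $\widehat{\mathcal{A}}_k$ is the set of words $w$ with $\max(w)=k$ such that (AC1) each $i\in\{1,\dots,k\}$ occurs in $w$, and (AC2) for each $i\in\{1,\dots,k-1\}$ the rightmost occurrence of $i$ is preceded by an occurrence of $i+1$, with subword order. $f(\pi)=d_\pi(1)d_\pi(2)\cdots d_\pi(n)$. *)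

theory Defs
  imports Main "HOL-Library.Sublist"
begin

definition is_perm :: "nat list \<Rightarrow> bool" where
  "is_perm p \<longleftrightarrow> p \<noteq> [] \<and> distinct p \<and> set p = {1..length p}"

definition order_iso_seq :: "nat list \<Rightarrow> nat list \<Rightarrow> bool" where
  "order_iso_seq xs ys \<longleftrightarrow> length xs = length ys \<and>
     (\<forall>i < length xs. \<forall>j < length xs. xs ! i < xs ! j \<longleftrightarrow> ys ! i < ys ! j)"

definition contains_pattern :: "nat list \<Rightarrow> nat list \<Rightarrow> bool" where
  "contains_pattern sigma pi \<longleftrightarrow> (\<exists>s. subseq s pi \<and> order_iso_seq sigma s)"

text \<open>Descents (0-based indices i with p_i > p_(i+1)).\<close>
definition descents :: "nat list \<Rightarrow> nat set" where
  "descents p = {i. Suc i < length p \<and> p ! i > p ! Suc i}"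

definition P :: "nat \<Rightarrow> nat list set" where
  "P k = {p. is_perm p \<and> card (descents p) = k}"

text \<open>0-based position of letter c in p (c occurs exactly once when p is a permutation).\<close>
definition pos :: "nat list \<Rightarrow> nat \<Rightarrow> nat" where
  "pos p c = (THE i. i < length p \<and> p ! i = c)"

definition dval :: "nat list \<Rightarrow> nat \<Rightarrow> nat" where
  "dval p c = 1 + card {i \<in> descents p. i < pos p c}"

definition f :: "nat list \<Rightarrow> nat list" where
  "f p = map (dval p) [1..<Suc (length p)]"

text \<open>Words are finite sequences of positive integers; subword order is subseq.\<close>
definition Ahat :: "nat \<Rightarrow> nat list set" where
  "Ahat k = {w. 0 \<notin> set w \<and> w \<noteq> [] \<and> Max (set w) = k
      \<and> (\<forall>i \<in> {1..k}. i \<in> set w)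
      \<and> (\<forall>i \<in> {1..<k}. \<exists>j l. j < l \<and> l < length w \<and> w ! j = Suc i \<and> w ! l = i
             \<and> (\<forall>l'. l < l' \<and> l' < length w \<longrightarrow> w ! l' \<noteq> i))}"

end

theory Submission
  imports Defs
begin


definition emb_idx :: "(nat \<Rightarrow> nat) \<Rightarrow> 'a list \<Rightarrow> 'a list \<Rightarrow> bool" where
  "emb_idx g xs ys \<longleftrightarrow> (\<forall>i j. i < j \<and> j < length xs \<longrightarrow> g i < g j) \<and>
     (\<forall>i < length xs. g i < length ys \<and> xs ! i = ys ! (g i))"

lemma subseq_imp_idx: "subseq xs ys \<Longrightarrow> \<exists>g. emb_idx g xs ys"
proof (induction rule: list_emb.induct)
  case (list_emb_Nil ys)
  then show ?case by (auto simp: emb_idx_def)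
next
  case (list_emb_Cons xs ys y)
  then obtain g where g: "emb_idx g xs ys" by blast
  have "emb_idx (Suc \<circ> g) xs (y#ys)" using g by (auto simp: emb_idx_def)
  then show ?case by blast
next
  case (list_emb_Cons2 x y xs ys)
  then obtain g where g: "emb_idx g xs ys" by blast
  define g' where "g' = (\<lambda>i. case i of 0 \<Rightarrow> 0 | Suc i \<Rightarrow> Suc (g i))"
  have "emb_idx g' (x#xs) (y#ys)" using g list_emb_Cons2(1)
    unfolding emb_idx_def g'_def
    by (auto split: nat.splits simp: nth_Cons')
  then show ?case by blast
qed

lemma idx_imp_subseq: "emb_idx g xs ys \<Longrightarrow> subseq xs ys"
proof (induction ys arbitrary: xs g)
  case Nil
  then show ?case by (cases xs) (auto simp: emb_idx_def)
next
  case (Cons y ys)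
  show ?case
  proof (cases xs)
    case Nil then show ?thesis by simp
  next
    case (Cons x xs')
    note xs = this
    have mono: "\<And>i j. i < j \<Longrightarrow> j < length xs \<Longrightarrow> g i < g j"
      and val: "\<And>i. i < length xs \<Longrightarrow> g i < Suc (length ys) \<and> xs ! i = (y#ys) ! (g i)"
      using Cons.prems by (auto simp: emb_idx_def)
    show ?thesis
    proof (cases "g 0 = 0")
      case True
      have xy: "x = y" using val[of 0] True xs by simp
      have pos: "\<And>i. i < length xs' \<Longrightarrow> g (Suc i) > 0"
        using mono[of 0] xs by (metis length_Cons not_less_eq gr0I zero_less_Suc)
      have "emb_idx (\<lambda>i. g (Suc i) - 1) xs' ys"
        unfolding emb_idx_def
      proof (intro conjI allI impI)
        fix i j assume "i < j \<and> j < length xs'"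
        then show "g (Suc i) - 1 < g (Suc j) - 1"
          using mono[of "Suc i" "Suc j"] pos[of i] xs by auto
      next
        fix i assume i: "i < length xs'"
        have "g (Suc i) < Suc (length ys) \<and> xs ! Suc i = (y#ys) ! g (Suc i)"
          using val[of "Suc i"] i xs by simp
        then show "g (Suc i) - 1 < length ys"
          using pos[OF i] xs by (cases "g (Suc i)") auto
      next
        fix i assume i: "i < length xs'"
        have "g (Suc i) < Suc (length ys) \<and> xs ! Suc i = (y#ys) ! g (Suc i)"
          using val[of "Suc i"] i xs by simp
        then show "xs' ! i = ys ! (g (Suc i) - 1)"
          using pos[OF i] xs by (cases "g (Suc i)") auto
      qed
      then have "subseq xs' ys" using Cons.IH by blast
      then show ?thesis using xs xy by simp
    next
      case False
      have pos: "\<And>i. i < length xs \<Longrightarrow> g i > 0"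
        using mono[of 0] False by (metis gr0I less_nat_zero_code not_gr0)
      have "emb_idx (\<lambda>i. g i - 1) xs ys"
        unfolding emb_idx_def
      proof (intro conjI allI impI)
        fix i j assume "i < j \<and> j < length xs"
        then show "g i - 1 < g j - 1"
          using mono[of i j] pos[of i] by auto
      next
        fix i assume i: "i < length xs"
        then show "g i - 1 < length ys"
          using val[OF i] pos[OF i] by (cases "g i") auto
      next
        fix i assume i: "i < length xs"
        then show "xs ! i = ys ! (g i - 1)"
          using val[OF i] pos[OF i] by (cases "g i") auto
      qed
      then have "subseq xs ys" using Cons.IH by blast
      then show ?thesis by (rule list_emb_Cons)
    qed
  qed
qed

lemma subseq_idx: "subseq xs ys \<longleftrightarrow> (\<exists>g. emb_idx g xs ys)"
  using subseq_imp_idx idx_imp_subseq by blast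



lemma perm_nth: "is_perm p \<Longrightarrow> i < length p \<Longrightarrow> p ! i \<in> {1..length p}"
  unfolding is_perm_def using nth_mem by blast

lemma perm_pos: assumes "is_perm p" "c \<in> {1..length p}"
  shows "pos p c < length p \<and> p ! (pos p c) = c"
proof -
  have d: "distinct p" and s: "set p = {1..length p}" using assms(1) by (auto simp: is_perm_def)
  obtain i where i: "i < length p" "p ! i = c" using assms(2) s by (metis in_set_conv_nth)
  have "pos p c = i" unfolding pos_def
  proof (rule the_equality)
    show "i < length p \<and> p ! i = c" using i by simp
  next
    fix j assume "j < length p \<and> p ! j = c"
    then show "j = i" using i d by (metis nth_eq_iff_index_eq)
  qed
  then show ?thesis using i by simp
qed

lemma pos_nth: assumes "is_perm p" "i < length p" shows "pos p (p ! i) = i"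
proof -
  have d: "distinct p" using assms(1) by (auto simp: is_perm_def)
  show ?thesis unfolding pos_def
  proof (rule the_equality)
    show "i < length p \<and> p ! i = p ! i" using assms by simp
  next
    fix j assume "j < length p \<and> p ! j = p ! i"
    then show "j = i" using assms d by (metis nth_eq_iff_index_eq)
  qed
qed

definition rr :: "nat list \<Rightarrow> nat \<Rightarrow> nat" where
  "rr p i = 1 + card {j \<in> descents p. j < i}"

lemma dval_rr: "dval p c = rr p (pos p c)"
  by (simp add: dval_def rr_def)

lemma descents_lt: "j \<in> descents p \<Longrightarrow> Suc j < length p"
  by (simp add: descents_def)

lemma finite_desc: "finite (descents p)"
  by (rule finite_subset[of _ "{..<length p}"]) (auto simp: descents_def)

lemma rr_Suc: "rr p (Suc i) = rr p i + (if i \<in> descents p then 1 else 0)"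
proof -
  let ?A = "{j \<in> descents p. j < i}"
  have fin: "finite ?A" using finite_desc by simp
  show ?thesis
  proof (cases "i \<in> descents p")
    case True
    then have "{j \<in> descents p. j < Suc i} = insert i ?A" by auto
    then show ?thesis using True fin by (simp add: rr_def)
  next
    case False
    then have "{j \<in> descents p. j < Suc i} = ?A" by (auto simp: less_Suc_eq)
    then show ?thesis using False by (simp add: rr_def)
  qed
qed

lemma rr_mono: "i \<le> i' \<Longrightarrow> rr p i \<le> rr p i'"
  unfolding rr_def by (auto intro!: card_mono finite_desc)

lemma rr_0: "rr p 0 = 1" by (simp add: rr_def)

lemma rr_le_last: "rr p i \<le> 1 + card (descents p)"
  unfolding rr_def by (auto intro!: card_mono finite_desc)

lemma rr_last: "rr p (length p - 1) = 1 + card (descents p)"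
proof -
  have "{j \<in> descents p. j < length p - 1} = descents p" using descents_lt by fastforce
  then show ?thesis by (simp add: rr_def)
qed

lemma noDesc: "i \<le> i' \<Longrightarrow> i' < length p \<Longrightarrow> (\<forall>d. i \<le> d \<and> d < i' \<longrightarrow> d \<notin> descents p)
   \<Longrightarrow> p ! i \<le> p ! i'"
proof (induction i' rule: dec_induct)
  case base then show ?case by simp
next
  case (step m)
  then have "p ! i \<le> p ! m" by auto
  moreover have "m \<notin> descents p" using step by auto
  then have "p ! m \<le> p ! Suc m" using step by (auto simp: descents_def)
  ultimately show ?case by simp
qed

lemma rr_strict: assumes "i < i'" "i' < length p" "p ! i > p ! i'"
  shows "rr p i < rr p i'"
proof -
  obtain d where d: "i \<le> d" "d < i'" "d \<in> descents p"
    using noDesc[of i i' p] assms by fastforce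
  have "rr p i \<le> rr p d" using d rr_mono by blast
  also have "\<dots> < rr p (Suc d)" using d rr_Suc by simp
  also have "\<dots> \<le> rr p i'" using d rr_mono by (simp add: Suc_leI)
  finally show ?thesis .
qed

lemma rr_eq_lt: assumes "distinct p" "i < i'" "i' < length p" "rr p i = rr p i'"
  shows "p ! i < p ! i'"
proof -
  have "p ! i \<noteq> p ! i'" using assms by (simp add: nth_eq_iff_index_eq)
  moreover have "\<not> p ! i > p ! i'" using rr_strict[of i i' p] assms by auto
  ultimately show ?thesis by simp
qed

lemma length_f: "length (f p) = length p" by (simp add: f_def del: upt_Suc)

lemma f_nth: "j < length p \<Longrightarrow> f p ! j = rr p (pos p (Suc j))"
  by (simp add: f_def dval_rr del: upt_Suc)

lemma f_nth_pos: assumes "is_perm p" "t < length p"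
  shows "f p ! (p ! t - 1) = rr p t"
proof -
  have "p ! t \<in> {1..length p}" using perm_nth assms by blast
  then have "p ! t - 1 < length p" "Suc (p ! t - 1) = p ! t" by auto
  then show ?thesis using f_nth pos_nth assms by metis
qed

lemma perm_eq: assumes "is_perm p" "is_perm q" "order_iso_seq p q" shows "p = q"
proof -
  have key: "p ! i = Suc (card {j. j < length p \<and> p ! j < p ! i})"
    if pp: "is_perm p" and i: "i < length p" for p :: "nat list" and i
  proof -
    have d: "distinct p" and s: "set p = {1..length p}" using pp by (auto simp: is_perm_def)
    have "(nth p) ` {j. j < length p \<and> p ! j < p ! i} = {x \<in> set p. x < p ! i}"
      by (auto simp: in_set_conv_nth)
    also have "\<dots> = {1..<p ! i}" using s perm_nth[OF pp i] by auto
    finally have img: "(nth p) ` {j. j < length p \<and> p ! j < p ! i} = {1..<p ! i}" .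
    have "inj_on (nth p) {j. j < length p \<and> p ! j < p ! i}"
      using d by (auto simp: inj_on_def nth_eq_iff_index_eq)
    then have "card {j. j < length p \<and> p ! j < p ! i} = card {1..<p ! i}"
      using img card_image by fastforce
    then show ?thesis using perm_nth[OF pp i] by simp
  qed
  have len: "length p = length q" using assms(3) by (simp add: order_iso_seq_def)
  show ?thesis
  proof (rule nth_equalityI)
    show "length p = length q" by fact
  next
    fix i assume i: "i < length p"
    have "{j. j < length p \<and> p ! j < p ! i} = {j. j < length q \<and> q ! j < q ! i}"
      using assms(3) i len by (auto simp: order_iso_seq_def)
    then show "p ! i = q ! i" using key[OF assms(1) i] key[OF assms(2)] i len by simp
  qed
qed



lemma smono_iff: fixes a b m :: nat and g :: "nat \<Rightarrow> nat" assumes "\<And>i j. i < j \<Longrightarrow> j < m \<Longrightarrow> g i < (g j :: nat)" "a < m" "b < m"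
  shows "a < b \<longleftrightarrow> g a < g b"
proof
  assume "a < b" then show "g a < g b" using assms by blast
next
  assume "g a < g b"
  show "a < b"
  proof (rule ccontr)
    assume "\<not> a < b"
    then have "b = a \<or> b < a" by auto
    then show False using assms \<open>g a < g b\<close> by (metis less_asym)
  qed
qed

lemma sub_imp_contains: assumes ps: "is_perm sigma" and pp: "is_perm pi"
  and sub: "subseq (f sigma) (f pi)"
  shows "contains_pattern sigma pi"
proof -
  obtain g where g: "emb_idx g (f sigma) (f pi)" using sub subseq_imp_idx by blast
  let ?m = "length sigma" let ?n = "length pi"
  have gm: "\<And>i j. i < j \<Longrightarrow> j < ?m \<Longrightarrow> g i < g j"
    and gv: "\<And>i. i < ?m \<Longrightarrow> g i < ?n \<and> f sigma ! i = f pi ! (g i)"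
    using g by (auto simp: emb_idx_def length_f)
  define s where "s = map (\<lambda>x. Suc (g (x - 1))) sigma"
  have sv: "\<And>t. t < ?m \<Longrightarrow> s ! t = Suc (g (sigma ! t - 1))" by (simp add: s_def)
  have sig_rng: "\<And>t. t < ?m \<Longrightarrow> sigma ! t \<in> {1..?m}" using perm_nth[OF ps] by blast
  have iso: "order_iso_seq sigma s"
    unfolding order_iso_seq_def
  proof (intro conjI allI impI)
    show "length sigma = length s" by (simp add: s_def)
  next
    fix i j assume i: "i < length sigma" and j: "j < length sigma"
    have a: "sigma ! i - 1 < ?m" "sigma ! j - 1 < ?m" using sig_rng[OF i] sig_rng[OF j] i j by auto
    have "sigma ! i < sigma ! j \<longleftrightarrow> sigma ! i - 1 < sigma ! j - 1" using sig_rng[OF i] sig_rng[OF j] i j by auto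
    also have "\<dots> \<longleftrightarrow> g (sigma ! i - 1) < g (sigma ! j - 1)" by (rule smono_iff[OF gm a])
    finally show "sigma ! i < sigma ! j \<longleftrightarrow> s ! i < s ! j" using sv i j by simp
  qed
  define h where "h t = pos pi (s ! t)" for t
  have srng: "s ! t \<in> {1..?n}" if t: "t < ?m" for t
  proof -
    have a: "sigma ! t - 1 < ?m" using sig_rng[OF t] t by auto
    show ?thesis using gv[OF a] sv[OF t] by simp
  qed
  have hv: "\<And>t. t < ?m \<Longrightarrow> h t < ?n \<and> pi ! (h t) = s ! t"
    unfolding h_def using perm_pos[OF pp srng] by blast
  have rreq: "rr pi (h t) = rr sigma t" if t: "t < ?m" for t
  proof -
    have a: "sigma ! t - 1 < ?m" using sig_rng[OF t] t by auto
    have "rr sigma t = f sigma ! (sigma ! t - 1)" using f_nth_pos[OF ps t] by simp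
    also have "\<dots> = f pi ! (g (sigma ! t - 1))" using gv[OF a] by simp
    also have "\<dots> = rr pi (pos pi (Suc (g (sigma ! t - 1))))" using f_nth gv[OF a] by blast
    also have "\<dots> = rr pi (h t)" using h_def sv t by simp
    finally show ?thesis by simp
  qed
  have "emb_idx h s pi"
    unfolding emb_idx_def
  proof (intro conjI allI impI)
    fix t t' assume tt: "t < t' \<and> t' < length s"
    then have t: "t < ?m" and t': "t' < ?m" and lt: "t < t'" by (auto simp: s_def)
    have "rr sigma t \<le> rr sigma t'" using rr_mono lt by simp
    then consider "rr sigma t < rr sigma t'" | "rr sigma t = rr sigma t'" by linarith
    then show "h t < h t'"
    proof cases
      case 1
      then have "rr pi (h t) < rr pi (h t')" using rreq t t' by simp
      then show ?thesis using rr_mono[of "h t'" "h t" pi] by linarith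
    next
      case 2
      have dsig: "distinct sigma" using ps by (simp add: is_perm_def)
      have "sigma ! t < sigma ! t'" using rr_eq_lt[OF dsig lt t' 2] .
      then have slt: "s ! t < s ! t'" using iso t t' by (simp add: order_iso_seq_def)
      have "h t \<noteq> h t'" using hv[OF t] hv[OF t'] slt by (metis less_irrefl)
      moreover have "\<not> h t' < h t"
      proof
        assume "h t' < h t"
        moreover have "h t < length pi" using hv[OF t] by simp
        moreover have "pi ! h t' > pi ! h t" using hv[OF t] hv[OF t'] slt by simp
        ultimately have "rr pi (h t') < rr pi (h t)" by (rule rr_strict)
        then show False using rreq t t' 2 by simp
      qed
      ultimately show ?thesis by simp
    qed
  next
    fix t assume "t < length s"
    then show "h t < length pi" using hv by (simp add: s_def)
  next
    fix t assume "t < length s"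
    then show "s ! t = pi ! h t" using hv by (simp add: s_def)
  qed
  then have "subseq s pi" using idx_imp_subseq by blast
  then show ?thesis using iso unfolding contains_pattern_def by blast
qed
lemma contains_imp_sub: assumes ps: "sigma \<in> P k" and pp: "pi \<in> P k"
  and con: "contains_pattern sigma pi"
  shows "subseq (f sigma) (f pi)"
proof -
  have psg: "is_perm sigma" and cs: "card (descents sigma) = k" using ps by (auto simp: P_def)
  have ppi: "is_perm pi" and cp: "card (descents pi) = k" using pp by (auto simp: P_def)
  obtain s where sub: "subseq s pi" and iso: "order_iso_seq sigma s"
    using con unfolding contains_pattern_def by blast
  obtain h where h: "emb_idx h s pi" using sub subseq_imp_idx by blast
  let ?m = "length sigma" let ?n = "length pi"
  have ls: "length s = ?m" using iso by (simp add: order_iso_seq_def)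
  have hm: "\<And>i j. i < j \<Longrightarrow> j < ?m \<Longrightarrow> h i < h j"
    and hv: "\<And>i. i < ?m \<Longrightarrow> h i < ?n \<and> s ! i = pi ! (h i)"
    using h ls by (auto simp: emb_idx_def)
  have isoI: "\<And>i j. i < ?m \<Longrightarrow> j < ?m \<Longrightarrow> sigma ! i < sigma ! j \<longleftrightarrow> s ! i < s ! j"
    using iso by (simp add: order_iso_seq_def)
  have m0: "?m > 0" using psg by (simp add: is_perm_def)
  have inc: "rr sigma (Suc t) + rr pi (h t) \<le> rr sigma t + rr pi (h (Suc t))"
    if t: "Suc t < ?m" for t
  proof (cases "t \<in> descents sigma")
    case True
    then have "sigma ! t > sigma ! Suc t" by (simp add: descents_def)
    then have "s ! t > s ! Suc t" using isoI t by simp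
    then have "pi ! h t > pi ! h (Suc t)" using hv[of t] hv[of "Suc t"] t by simp
    moreover have "h t < h (Suc t)" using hm t by simp
    moreover have "h (Suc t) < ?n" using hv t by simp
    ultimately have "rr pi (h t) < rr pi (h (Suc t))" using rr_strict by blast
    then show ?thesis using True rr_Suc[of sigma t] by simp
  next
    case False
    have "h t < h (Suc t)" using hm t by simp
    then have "rr pi (h t) \<le> rr pi (h (Suc t))" using rr_mono by simp
    then show ?thesis using False rr_Suc[of sigma t] by simp
  qed
  define D where "D t = int (rr pi (h t)) - int (rr sigma t)" for t
  have Dmono: "t \<le> t' \<Longrightarrow> t' < ?m \<Longrightarrow> D t \<le> D t'" for t t'
  proof (induction t' rule: dec_induct)
    case base then show ?case by simp
  next
    case (step u)
    have "D u \<le> D (Suc u)" using inc[OF step(4)] unfolding D_def by linarith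
    then show ?case using step by simp
  qed
  have D0: "D 0 \<ge> 0" unfolding D_def using rr_0[of sigma] by (simp add: rr_def)
  have Dl: "D (?m - 1) \<le> 0"
  proof -
    have "rr sigma (?m - 1) = 1 + k" using rr_last[of sigma] cs by simp
    moreover have "rr pi (h (?m - 1)) \<le> 1 + k" using rr_le_last[of pi] cp by simp
    ultimately show ?thesis unfolding D_def by simp
  qed
  have rreq: "rr pi (h t) = rr sigma t" if t: "t < ?m" for t
  proof -
    have "D 0 \<le> D t" using Dmono t by simp
    moreover have "D t \<le> D (?m - 1)" using Dmono t by simp
    ultimately have "D t = 0" using D0 Dl by simp
    then show ?thesis unfolding D_def by simp
  qed
  define G where "G i = s ! (pos sigma (Suc i)) - 1" for i
  have tv: "pos sigma (Suc i) < ?m \<and> sigma ! pos sigma (Suc i) = Suc i" if i: "i < ?m" for i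
    using perm_pos[OF psg] i by simp
  have "emb_idx G (f sigma) (f pi)"
    unfolding emb_idx_def length_f
  proof (intro conjI allI impI)
    fix i j assume ij: "i < j \<and> j < ?m"
    then have i: "i < ?m" and j: "j < ?m" by auto
    let ?ti = "pos sigma (Suc i)" and ?tj = "pos sigma (Suc j)"
    have "sigma ! ?ti < sigma ! ?tj" using tv[OF i] tv[OF j] ij by simp
    then have "s ! ?ti < s ! ?tj" using isoI tv[OF i] tv[OF j] by blast
    moreover have "s ! ?ti \<ge> 1" using hv[of ?ti] tv[OF i] perm_nth[OF ppi, of "h ?ti"] by simp
    ultimately show "G i < G j" unfolding G_def by simp
  next
    fix i assume i: "i < ?m"
    let ?t = "pos sigma (Suc i)"
    have t: "?t < ?m" using tv[OF i] by simp
    have st: "s ! ?t = pi ! h ?t" "h ?t < ?n" using hv[OF t] by auto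
    have rng: "pi ! h ?t \<in> {1..?n}" using perm_nth[OF ppi st(2)] .
    show "G i < ?n" unfolding G_def using st rng by auto
  next
    fix i assume i: "i < ?m"
    let ?t = "pos sigma (Suc i)"
    have t: "?t < ?m" using tv[OF i] by simp
    have st: "s ! ?t = pi ! h ?t" "h ?t < ?n" using hv[OF t] by auto
    have "f sigma ! i = rr sigma ?t" using f_nth i by simp
    also have "\<dots> = rr pi (h ?t)" using rreq[OF t] by simp
    also have "\<dots> = f pi ! (pi ! h ?t - 1)" using f_nth_pos[OF ppi st(2)] by simp
    finally show "f sigma ! i = f pi ! G i" unfolding G_def using st by simp
  qed
  then show ?thesis using idx_imp_subseq by blast
qed



lemma rr_ivt: "1 \<le> j \<Longrightarrow> j \<le> rr p m \<Longrightarrow> \<exists>i \<le> m. rr p i = j"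
proof (induction m)
  case 0 then show ?case using rr_0[of p] by auto
next
  case (Suc m)
  show ?case
  proof (cases "j \<le> rr p m")
    case True then show ?thesis using Suc by (meson le_Suc_eq)
  next
    case False
    then have "j = rr p (Suc m)" using Suc.prems rr_Suc[of p m] by (simp split: if_splits)
    then show ?thesis by blast
  qed
qed

lemma f_in_Ahat: assumes pk: "p \<in> P k" shows "f p \<in> Ahat (Suc k)"
proof -
  have pp: "is_perm p" and cp: "card (descents p) = k" using pk by (auto simp: P_def)
  let ?n = "length p" let ?w = "f p"
  have n0: "?n > 0" using pp by (simp add: is_perm_def)
  have lw: "length ?w = ?n" by (rule length_f)
  have vals: "1 \<le> x \<and> x \<le> Suc k" if x: "x \<in> set ?w" for x
  proof -
    obtain j where j: "j < ?n" "x = ?w ! j" using x lw by (metis in_set_conv_nth)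
    then have "x = rr p (pos p (Suc j))" using f_nth by simp
    then show ?thesis using rr_le_last[of p] cp by (simp add: rr_def)
  qed
  have mem: "i \<in> set ?w" if i: "1 \<le> i" "i \<le> Suc k" for i
  proof -
    have "i \<le> rr p (?n - 1)" using rr_last[of p] cp i by simp
    then obtain t where t: "t \<le> ?n - 1" "rr p t = i" using rr_ivt i by blast
    have tn: "t < ?n" using t(1) n0 by linarith
    have "?w ! (p ! t - 1) = i" using f_nth_pos[OF pp tn] t by simp
    moreover have "p ! t - 1 < ?n" using perm_nth[OF pp tn] by auto
    ultimately show ?thesis using lw by (metis nth_mem)
  qed
  have ac2: "\<exists>j l. j < l \<and> l < length ?w \<and> ?w ! j = Suc i \<and> ?w ! l = i
             \<and> (\<forall>l'. l < l' \<and> l' < length ?w \<longrightarrow> ?w ! l' \<noteq> i)"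
    if i: "1 \<le> i" "i < Suc k" for i
  proof -
    have "Suc i \<le> rr p (?n - 1)" using rr_last[of p] cp i by simp
    then have ex: "\<exists>u. u \<le> ?n - 1 \<and> rr p u = Suc i" using rr_ivt by fastforce
    define u where "u = (LEAST u. u \<le> ?n - 1 \<and> rr p u = Suc i)"
    have u: "u \<le> ?n - 1" "rr p u = Suc i" using LeastI_ex[OF ex] unfolding u_def by auto
    have u0: "u \<noteq> 0" proof assume "u = 0" then show False using u i rr_0[of p] by simp qed
    define t where "t = u - 1"
    have tu: "Suc t = u" using u0 t_def by simp
    have un: "u < ?n" using u(1) n0 by linarith
    have "rr p t \<noteq> Suc i"
    proof
      assume "rr p t = Suc i"
      then have "u \<le> t" unfolding u_def using u(1) tu by (intro Least_le) simp
      then show False using tu by simp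
    qed
    moreover have "rr p t \<le> rr p u" using tu rr_mono by simp
    ultimately have td: "t \<in> descents p" and rt: "rr p t = i"
      using rr_Suc[of p t] tu u(2) by (auto split: if_splits)
    have ab: "p ! t > p ! u" using td tu by (simp add: descents_def)
    have tn: "t < ?n" using tu un by simp
    have ra: "p ! t \<in> {1..?n}" using perm_nth[OF pp tn] .
    have rb: "p ! u \<in> {1..?n}" using perm_nth[OF pp un] .
    define j where "j = p ! u - 1"
    define l where "l = p ! t - 1"
    have jl: "j < l" using ab ra rb j_def l_def by auto
    have ln: "l < length ?w" using ra lw l_def by auto
    have wj: "?w ! j = Suc i" using f_nth_pos[OF pp un] u j_def by simp
    have wl: "?w ! l = i" using f_nth_pos[OF pp tn] rt l_def by simp
    have rest: "?w ! l' \<noteq> i" if l': "l < l'" "l' < length ?w" for l'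
    proof
      assume eq: "?w ! l' = i"
      let ?q = "pos p (Suc l')"
      have cq: "Suc l' \<in> {1..?n}" using l' lw by simp
      have q: "?q < ?n" "p ! ?q = Suc l'" using perm_pos[OF pp cq] by auto
      have rq: "rr p ?q = i" using eq f_nth l' lw by simp
      have "\<not> u \<le> ?q" using rr_mono[of u ?q p] u rq by auto
      then have qt: "?q \<le> t" using tu by simp
      have big: "p ! ?q > p ! t" using q l' l_def ra by auto
      show False
      proof (cases "?q = t")
        case True then show False using big by simp
      next
        case False
        then have "?q < t" using qt by simp
        then have "rr p ?q < rr p t" using rr_strict[of ?q t p] tn big by simp
        then show False using rq rt by simp
      qed
    qed
    show ?thesis using jl ln wj wl rest by blast
  qed
  have fin: "finite (set ?w)" by simp
  have ne: "?w \<noteq> []" using lw n0 by auto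
  have mx: "Max (set ?w) = Suc k"
    by (rule Max_eqI[OF fin]) (use vals mem in auto)
  show ?thesis unfolding Ahat_def
    using vals mem ac2 ne mx by fastforce
qed



lemma keycmp: fixes a b x y N :: nat
  assumes "a * N + x < b * N + y" "y < N"
  shows "a \<le> b \<and> (a = b \<longrightarrow> x < y)"
proof (cases "b < a")
  case True
  then have "Suc b * N \<le> a * N" by (intro mult_le_mono1) simp
  then show ?thesis using assms by simp
next
  case False then show ?thesis using assms by auto
qed

lemma surj_Ahat: assumes wA: "w \<in> Ahat (Suc k)" shows "\<exists>p \<in> P k. f p = w"
proof -
  let ?n = "length w"
  have w0: "0 \<notin> set w" and wne: "w \<noteq> []" and wmax: "Max (set w) = Suc k"
    and ac1: "\<forall>i \<in> {1..Suc k}. i \<in> set w"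
    and ac2: "\<forall>i \<in> {1..<Suc k}. \<exists>j l. j < l \<and> l < length w \<and> w ! j = Suc i \<and> w ! l = i
             \<and> (\<forall>l'. l < l' \<and> l' < length w \<longrightarrow> w ! l' \<noteq> i)"
    using wA unfolding Ahat_def by blast+
  have n0: "?n > 0" using wne by simp
  have wrng: "1 \<le> x \<and> x \<le> Suc k" if "x \<in> set w" for x
    using that w0 wmax by (metis Max_ge finite_set less_one not_le)
  define K where "K c = w ! (c - 1) * (Suc ?n) + c" for c
  define p where "p = sort_key K [1..<Suc ?n]"
  have lp: "length p = ?n" by (simp add: p_def del: upt_Suc)
  have dp: "distinct p" by (simp add: p_def del: upt_Suc)
  have sp: "set p = {1..?n}" by (auto simp: p_def simp del: upt_Suc)
  have pp: "is_perm p" using lp dp sp n0 by (auto simp: is_perm_def)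
  have srt: "sorted (map K p)" by (simp add: p_def del: upt_Suc)
  define v where "v i = w ! (p ! i - 1)" for i
  have prng: "\<And>i. i < ?n \<Longrightarrow> p ! i \<in> {1..?n}" using perm_nth[OF pp] lp by simp
  have vrng: "1 \<le> v i \<and> v i \<le> Suc k" if i: "i < ?n" for i
  proof -
    have "p ! i - 1 < ?n" using prng[OF i] by auto
    then show ?thesis unfolding v_def using wrng nth_mem by blast
  qed
  have cmp: "v i \<le> v i' \<and> (v i = v i' \<longrightarrow> p ! i < p ! i')" if ii: "i < i'" "i' < ?n" for i i'
  proof -
    have "K (p ! i) \<le> K (p ! i')" using srt ii lp by (simp add: sorted_iff_nth_mono)
    moreover have "p ! i \<noteq> p ! i'" using dp ii lp by (simp add: nth_eq_iff_index_eq)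
    moreover have "K (p ! i) \<noteq> K (p ! i')"
    proof
      assume "K (p ! i) = K (p ! i')"
      then have "K (p ! i) mod Suc ?n = K (p ! i') mod Suc ?n" by simp
      moreover have "K c mod Suc ?n = c" if "c \<in> {1..?n}" for c
      proof -
        have "K c = c + w ! (c - 1) * Suc ?n" by (simp add: K_def)
        then have "K c mod Suc ?n = c mod Suc ?n" by (simp only: mod_mult_self1)
        then show ?thesis using that by simp
      qed
      ultimately have "p ! i = p ! i'" using prng ii by (metis less_trans)
      then show False using \<open>p ! i \<noteq> p ! i'\<close> by simp
    qed
    ultimately have "K (p ! i) < K (p ! i')" by simp
    then have "v i * Suc ?n + p ! i < v i' * Suc ?n + p ! i'" unfolding K_def v_def by simp
    moreover have "p ! i' < Suc ?n" using prng[OF ii(2)] by simp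
    ultimately show ?thesis using keycmp by blast
  qed
  have vmono: "v i \<le> v i'" if "i \<le> i'" "i' < ?n" for i i'
    using cmp that by (cases "i = i'") auto
  have letter: "\<exists>t < ?n. v t = j" if j: "j \<in> set w" for j
  proof -
    obtain x where x: "x < ?n" "w ! x = j" using j by (metis in_set_conv_nth)
    have "Suc x \<in> set p" using sp x by simp
    then obtain t where t: "t < ?n" "p ! t = Suc x" using lp by (metis in_set_conv_nth)
    then show ?thesis using x unfolding v_def by auto
  qed
  have step1: "v (Suc i) \<le> Suc (v i)" if i: "Suc i < ?n" for i
  proof (rule ccontr)
    assume big: "\<not> v (Suc i) \<le> Suc (v i)"
    have "Suc (v i) \<in> set w" using ac1 vrng[of i] vrng[OF i] big i by auto
    then obtain t where t: "t < ?n" "v t = Suc (v i)" using letter by blast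
    show False
    proof (cases "t \<le> i")
      case True then show False using vmono[of t i] t i by simp
    next
      case False then show False using vmono[of "Suc i" t] t big by simp
    qed
  qed
  have stepd: "p ! i > p ! Suc i" if i: "Suc i < ?n" and jump: "v (Suc i) = Suc (v i)" for i
  proof -
    let ?j = "v i"
    have j: "?j \<in> {1..<Suc k}" using vrng[of i] vrng[OF i] jump i by auto
    obtain a b where ab: "a < b" "b < ?n" "w ! a = Suc ?j" "w ! b = ?j" using ac2 j by blast
    have "Suc b \<in> set p" using sp ab by simp
    then obtain tb where tb: "tb < ?n" "p ! tb = Suc b" using lp by (metis in_set_conv_nth)
    have "Suc a \<in> set p" using sp ab by simp
    then obtain ta where ta: "ta < ?n" "p ! ta = Suc a" using lp by (metis in_set_conv_nth)
    have vtb: "v tb = ?j" using tb ab unfolding v_def by simp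
    have vta: "v ta = Suc ?j" using ta ab unfolding v_def by simp
    have B: "Suc b \<le> p ! i"
    proof -
      have "tb \<le> i"
      proof (rule ccontr)
        assume "\<not> tb \<le> i" then have "v (Suc i) \<le> v tb" using vmono tb by simp
        then show False using vtb jump by simp
      qed
      then show ?thesis
      proof (cases "tb = i")
        case True then show ?thesis using tb by simp
      next
        case False
        then have "tb < i" using \<open>tb \<le> i\<close> by simp
        then have "p ! tb < p ! i" using cmp[of tb i] vtb i by simp
        then show ?thesis using tb by simp
      qed
    qed
    have A: "p ! Suc i \<le> Suc a"
    proof -
      have "Suc i \<le> ta"
      proof (rule ccontr)
        assume "\<not> Suc i \<le> ta" then have "v ta \<le> v i" using vmono i by simp
        then show False using vta by simp
      qed
      then show ?thesis
      proof (cases "ta = Suc i")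
        case True then show ?thesis using ta by simp
      next
        case False
        then have "Suc i < ta" using \<open>Suc i \<le> ta\<close> by simp
        then have "p ! Suc i < p ! ta" using cmp[of "Suc i" ta] vta jump ta by simp
        then show ?thesis using ta by simp
      qed
    qed
    show ?thesis using A B ab by simp
  qed
  have desc_iff: "i \<in> descents p \<longleftrightarrow> Suc i < ?n \<and> v (Suc i) = Suc (v i)" for i
  proof
    assume d: "i \<in> descents p"
    then have i: "Suc i < ?n" and gt: "p ! i > p ! Suc i" using lp by (auto simp: descents_def)
    have "v i \<le> v (Suc i)" using cmp[of i "Suc i"] i by simp
    moreover have "v i \<noteq> v (Suc i)" using cmp[of i "Suc i"] i gt by auto
    ultimately show "Suc i < ?n \<and> v (Suc i) = Suc (v i)" using step1[OF i] i by simp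
  next
    assume "Suc i < ?n \<and> v (Suc i) = Suc (v i)"
    then show "i \<in> descents p" using stepd lp by (auto simp: descents_def)
  qed
  have v0: "v 0 = 1"
  proof -
    have "1 \<in> set w" using ac1 by simp
    then obtain t where "t < ?n" "v t = 1" using letter by blast
    then show ?thesis using vmono[of 0 t] vrng[of 0] n0 by simp
  qed
  have rrv: "i < ?n \<Longrightarrow> rr p i = v i" for i
  proof (induction i)
    case 0 then show ?case using v0 rr_0 by simp
  next
    case (Suc i)
    have "v i \<le> v (Suc i)" using vmono Suc.prems by simp
    then show ?case using Suc rr_Suc[of p i] desc_iff[of i] step1[OF Suc.prems] by auto
  qed
  have vlast: "v (?n - 1) = Suc k"
  proof -
    have "Suc k \<in> set w" using ac1 by simp
    then obtain t where t: "t < ?n" "v t = Suc k" using letter by blast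
    have "t \<le> ?n - 1" "?n - 1 < ?n" using t n0 by linarith+
    then show ?thesis using vmono[of t "?n - 1"] vrng[of "?n - 1"] t by simp
  qed
  have "card (descents p) = k" using rr_last[of p] rrv[of "?n - 1"] vlast lp n0 by simp
  then have pk: "p \<in> P k" using pp by (simp add: P_def)
  have "f p = w"
  proof (rule nth_equalityI)
    show "length (f p) = length w" using length_f lp by simp
  next
    fix j assume "j < length (f p)"
    then have j: "j < ?n" using length_f lp by simp
    have c: "Suc j \<in> {1..length p}" using j lp by simp
    have q: "pos p (Suc j) < ?n" "p ! pos p (Suc j) = Suc j" using perm_pos[OF pp c] lp by auto
    have "f p ! j = rr p (pos p (Suc j))" using f_nth j lp by simp
    also have "\<dots> = v (pos p (Suc j))" using rrv q by simp
    also have "\<dots> = w ! j" unfolding v_def using q by simp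
    finally show "f p ! j = w ! j" .
  qed
  then show ?thesis using pk by blast
qed


theorem mainTheorem3:
  fixes k :: nat
  shows "bij_betw f (P k) (Ahat (Suc k)) \<and>
         (\<forall>sigma \<in> P k. \<forall>pi \<in> P k.
            contains_pattern sigma pi \<longleftrightarrow> subseq (f sigma) (f pi))"
proof
  have inj: "inj_on f (P k)"
  proof (rule inj_onI)
    fix sigma pi assume s: "sigma \<in> P k" and p: "pi \<in> P k" and eq: "f sigma = f pi"
    have ps: "is_perm sigma" and pp: "is_perm pi" using s p by (auto simp: P_def)
    have "contains_pattern sigma pi" using sub_imp_contains[OF ps pp] eq by simp
    then obtain t where t: "subseq t pi" "order_iso_seq sigma t"
      unfolding contains_pattern_def by blast
    have "length t = length pi" using t(2) eq length_f[of sigma] length_f[of pi]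
      by (simp add: order_iso_seq_def)
    then have "t = pi" using subseq_same_length t(1) by blast
    then show "sigma = pi" using perm_eq[OF ps pp] t(2) by simp
  qed
  have img: "f ` P k = Ahat (Suc k)"
    using f_in_Ahat surj_Ahat by blast
  show "bij_betw f (P k) (Ahat (Suc k))" using inj img by (simp add: bij_betw_def)
next
  show "\<forall>sigma \<in> P k. \<forall>pi \<in> P k.
            contains_pattern sigma pi \<longleftrightarrow> subseq (f sigma) (f pi)"
    using contains_imp_sub sub_imp_contains by (auto simp: P_def)
qed

end
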